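(* Let $k\ge1$ and let $B\in\mathfrak{gl}_n(\mathbb C)$ satisfy $B[B,B^*]=-B$, $B^k\ne0$, $B^{k+1}=0$. Let $\mathbb C^n=V_0\oplus\cdots\oplus V_k$ be an orthogonal decomposition with $V_0=\ker B$, $B(V_i)\subset V_{i-1}$ for $1\le i\le k$, and such that $E_i:=\mathrm{Pr}_{V_{i-1}}B|_{V_i}$ satisfy $E_i^*E_i-E_{i+1}E_{i+1}^*=\mathrm{Id}_{V_i}$ for $1\le i<k$ and $E_k^*E_k=\mathrm{Id}_{V_k}$ (such a decomposition exists). Then there is an orthonormal basis of $\mathbb C^n$ subordinate to this splitting in which $B$ is represented by the block matrix whose only nonzero blocks are $\Sigma_i\in\mathbb C^{\dim V_{i-1}\times\dim V_i}$ in block position $(i-1,i)$, $1\le i\le k$, where each $\Sigma_i$ has nonzero entries only on its main diagonal, these entries $\sigma_{ij}:=(\Sigma_i)_{jj}$ ($1\le j\le\dim V_i$) being positive reals given recursively by $$\sigma_{ij}=\begin{cases}\sqrt{1+\sigma_{(i+1)j}^2},& i<k,\ 1\le j\le\dim V_{i+1},\\ 1,& i<k,\ \dim V_{i+1}<j\le\dim V_i,\\ 1,& i=k,\ 1\le j\le\dim V_k.\end{cases}$$ In particular this matrix representation is uniquely determined by the numbers $\dim V_i$, and hence only by the Jordan decomposition of $B$.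
   Context: $\mathbb C^n$ carries the standard Hermitian inner product; $^*$ denotes adjoint, $\mathrm{Pr}_V$ orthogonal projection onto $V$, $[X,Y]=XY-YX$. A basis is subordinate to the splitting if it is a union of bases of the $V_i$, listed in order $V_0,V_1,\dots,V_k$. *)

theory Defs
  imports "HOL-Analysis.Analysis"
begin

definition cinner :: "complex^'n \<Rightarrow> complex^'n \<Rightarrow> complex" where
  "cinner x y = (\<Sum>i\<in>UNIV. x$i * cnj (y$i))"

definition adjoint :: "complex^'n^'n \<Rightarrow> complex^'n^'n" where
  "adjoint A = (\<chi> i j. cnj (A$j$i))"

definition mpow :: "complex^'n^'n \<Rightarrow> nat \<Rightarrow> complex^'n^'n" where
  "mpow A m = (((**) A) ^^ m) (mat 1)"

definition cproj :: "(complex^'n) set \<Rightarrow> complex^'n \<Rightarrow> complex^'n" where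
  "cproj V x = (THE y. y \<in> V \<and> (\<forall>z\<in>V. cinner (x - y) z = 0))"

text \<open>E_i = Pr_{V_{i-1}} B restricted to V_i, and its adjoint E_i^* : V_{i-1} \<rightarrow> V_i,
  which is Pr_{V_i} B^* restricted to V_{i-1}.\<close>
definition Eop :: "complex^'n^'n \<Rightarrow> (nat \<Rightarrow> (complex^'n) set) \<Rightarrow> nat \<Rightarrow> complex^'n \<Rightarrow> complex^'n" where
  "Eop B V i x = cproj (V (i - 1)) (B *v x)"

definition Eadj :: "complex^'n^'n \<Rightarrow> (nat \<Rightarrow> (complex^'n) set) \<Rightarrow> nat \<Rightarrow> complex^'n \<Rightarrow> complex^'n" where
  "Eadj B V i y = cproj (V i) (adjoint B *v y)"

function sigma :: "nat \<Rightarrow> (nat \<Rightarrow> nat) \<Rightarrow> nat \<Rightarrow> nat \<Rightarrow> real" where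
  "sigma k d i j =
     (if i < k \<and> j \<le> d (Suc i) then sqrt (1 + (sigma k d (Suc i) j)^2) else 1)"
  by auto
termination by (relation "Wellfounded.measure (\<lambda>(k,d,i,j). k - i)") auto

end

theory Submission
  imports Defs
begin


lemma cinner_add_left: "cinner (x + y) z = cinner x z + cinner y z"
  by (simp add: cinner_def distrib_right sum.distrib)
lemma cinner_diff_left: "cinner (x - y) z = cinner x z - cinner y z"
  by (simp add: cinner_def left_diff_distrib sum_subtractf)
lemma cinner_scale_left: "cinner (c *s x) z = c * cinner x z"
  by (simp add: cinner_def sum_distrib_left mult.assoc)
lemma cinner_zero_left[simp]: "cinner 0 z = 0"
  by (simp add: cinner_def)
lemma cinner_commute: "cinner x y = cnj (cinner y x)"
  by (simp add: cinner_def mult.commute)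
lemma cinner_zero_right[simp]: "cinner z 0 = 0"
  by (simp add: cinner_def)
lemma cinner_add_right: "cinner z (x + y) = cinner z x + cinner z y"
  by (simp add: cinner_def distrib_left sum.distrib)
lemma cinner_diff_right: "cinner z (x - y) = cinner z x - cinner z y"
  by (simp add: cinner_def right_diff_distrib sum_subtractf)
lemma cinner_scale_right: "cinner z (c *s x) = cnj c * cinner z x"
  by (simp add: cinner_def sum_distrib_left mult.assoc mult.left_commute)
lemma cinner_sum_left: "finite S \<Longrightarrow> cinner (sum f S) z = (\<Sum>l\<in>S. cinner (f l) z)"
  by (induction S rule: finite_induct) (auto simp: cinner_add_left)
lemma cinner_self: "cinner x x = complex_of_real (\<Sum>i\<in>UNIV. (cmod (x$i))^2)"
  unfolding cinner_def of_real_sum by (simp only: complex_norm_square)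
lemma cinner_self_eq0: "cinner x x = 0 \<longleftrightarrow> x = 0"
proof
  assume "cinner x x = 0"
  hence "(\<Sum>i\<in>UNIV. (cmod (x$i))^2) = 0" using cinner_self[of x] by (metis of_real_eq_0_iff)
  hence "\<forall>i\<in>UNIV. (cmod (x$i))^2 = 0" by (subst (asm) sum_nonneg_eq_0_iff) auto
  thus "x = 0" by (simp add: vec_eq_iff)
qed simp

lemma adj_left: "cinner (B *v x) y = cinner x (adjoint B *v y)"
proof -
  have "cinner (B *v x) y = (\<Sum>i\<in>UNIV. \<Sum>j\<in>UNIV. B$i$j * x$j * cnj (y$i))"
    by (simp add: cinner_def matrix_vector_mult_def sum_distrib_right)
  also have "\<dots> = (\<Sum>j\<in>UNIV. \<Sum>i\<in>UNIV. B$i$j * x$j * cnj (y$i))"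
    by (rule sum.swap)
  also have "\<dots> = cinner x (adjoint B *v y)"
    by (simp add: cinner_def matrix_vector_mult_def adjoint_def sum_distrib_left mult_ac)
  finally show ?thesis .
qed
lemma adj_right: "cinner (adjoint B *v y) x = cinner y (B *v x)"
  by (metis adj_left cinner_commute)

definition onf :: "(nat \<Rightarrow> complex^'n) \<Rightarrow> nat \<Rightarrow> bool" where
  "onf w m \<longleftrightarrow> (\<forall>j\<in>{1..m}. \<forall>j'\<in>{1..m}. cinner (w j) (w j') = (if j = j' then 1 else 0))"

lemma onf_inj: "onf w m \<Longrightarrow> inj_on w {1..m}"
  unfolding onf_def inj_on_def by (metis one_neq_zero)

lemma onf_set: "onf w m \<Longrightarrow> x \<in> w ` {1..m} \<Longrightarrow> y \<in> w ` {1..m} \<Longrightarrow>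
   cinner x y = (if x = y then 1 else 0)"
  unfolding onf_def by auto

lemma onf_indep: assumes "onf w m" shows "vec.independent (w ` {1..m})"
proof (rule vec.independent_if_scalars_zero)
  show "finite (w ` {1..m})" by simp
  fix f x assume s: "(\<Sum>x\<in>w ` {1..m}. f x *s x) = 0" and x: "x \<in> w ` {1..m}"
  have "0 = cinner (\<Sum>x\<in>w ` {1..m}. f x *s x) x" by (subst s) simp
  also have "\<dots> = (\<Sum>y\<in>w ` {1..m}. f y * cinner y x)"
    by (simp add: cinner_sum_left cinner_scale_left)
  also have "\<dots> = (\<Sum>y\<in>w ` {1..m}. if y = x then f y else 0)"
    by (rule sum.cong) (auto simp: onf_set[OF assms _ x])
  also have "\<dots> = f x" using x by (simp add: sum.delta)
  finally show "f x = 0" by simp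
qed

lemma onf_card: assumes "onf w m" shows "card (w ` {1..m}) = m"
proof -
  have "card (w ` {1..m}) = card {1..m}" by (rule card_image[OF onf_inj[OF assms]])
  thus ?thesis by simp
qed

lemma onf_le_dim: assumes "onf w m" "\<forall>j\<in>{1..m}. w j \<in> W" shows "m \<le> vec.dim W"
  using vec.independent_card_le_dim[of "w ` {1..m}" W] onf_indep[OF assms(1)] onf_card[OF assms(1)] assms(2)
  by auto

lemma onf_span: assumes "onf w (vec.dim W)" "\<forall>j\<in>{1..vec.dim W}. w j \<in> W"
  shows "W \<subseteq> vec.span (w ` {1..vec.dim W})"
  using vec.card_eq_dim[of "w ` {1..vec.dim W}" W] onf_indep[OF assms(1)] onf_card[OF assms(1)] assms(2)
  by auto

lemma orth_span: assumes "z \<in> vec.span S" "\<forall>s\<in>S. cinner x s = 0" shows "cinner x z = 0"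
  using assms(1)
proof (induction rule: vec.span_induct)
  case base
  show ?case unfolding vec.subspace_def
    by (auto simp: cinner_add_right cinner_scale_right)
next
  case (step y) thus ?case using assms(2) by auto
qed

lemma orth_span_zero: assumes "x \<in> vec.span S" "\<forall>s\<in>S. cinner x s = 0" shows "x = 0"
  using orth_span[OF assms] cinner_self_eq0 by blast

lemma onf_extend_aux:
  assumes W: "vec.subspace W"
  shows "vec.dim W - m = n \<Longrightarrow> onf w m \<Longrightarrow> \<forall>j\<in>{1..m}. w j \<in> W \<Longrightarrow>
    \<exists>w'. (\<forall>j\<in>{1..m}. w' j = w j) \<and> (\<forall>j\<in>{1..vec.dim W}. w' j \<in> W) \<and> onf w' (vec.dim W)"
proof (induction n arbitrary: m w)
  case 0
  hence "m = vec.dim W" using onf_le_dim by fastforce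
  thus ?case using 0 by blast
next
  case (Suc n)
  note on = Suc.prems(2) and wW = Suc.prems(3)
  have "m < vec.dim W" using Suc.prems(1) by simp
  have "\<not> W \<subseteq> vec.span (w ` {1..m})"
  proof
    assume "W \<subseteq> vec.span (w ` {1..m})"
    hence "vec.dim W \<le> card (w ` {1..m})" by (intro vec.dim_le_card) auto
    also have "\<dots> \<le> m" using card_image_le[of "{1..m}" w] by simp
    finally show False using \<open>m < vec.dim W\<close> by simp
  qed
  then obtain x where xW: "x \<in> W" and xs: "x \<notin> vec.span (w ` {1..m})" by blast
  define y where "y = x - (\<Sum>j\<in>{1..m}. cinner x (w j) *s w j)"
  have sp: "(\<Sum>j\<in>{1..m}. cinner x (w j) *s w j) \<in> vec.span (w ` {1..m})"
    by (intro vec.span_sum vec.span_scale vec.span_base) auto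
  have yW: "y \<in> W" unfolding y_def
    by (intro vec.subspace_diff[OF W xW] vec.subspace_sum[OF W] vec.subspace_scale[OF W]) (use wW in auto)
  have yne: "y \<noteq> 0"
  proof
    assume "y = 0"
    hence "x = (\<Sum>j\<in>{1..m}. cinner x (w j) *s w j)" unfolding y_def by simp
    thus False using xs sp by simp
  qed
  have yorth: "cinner y (w l) = 0" if l: "l \<in> {1..m}" for l
  proof -
    have "cinner y (w l) = cinner x (w l) - (\<Sum>j\<in>{1..m}. cinner x (w j) * cinner (w j) (w l))"
      unfolding y_def by (simp add: cinner_diff_left cinner_sum_left cinner_scale_left)
    also have "(\<Sum>j\<in>{1..m}. cinner x (w j) * cinner (w j) (w l)) =
        (\<Sum>j\<in>{1..m}. if j = l then cinner x (w j) else 0)"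
      by (rule sum.cong) (use on l in \<open>auto simp: onf_def\<close>)
    also have "\<dots> = cinner x (w l)" using l by (simp add: sum.delta)
    finally show ?thesis by simp
  qed
  define c where "c = (\<Sum>i\<in>UNIV. (cmod (y$i))^2)"
  have cy: "cinner y y = complex_of_real c" unfolding c_def by (rule cinner_self)
  have cpos: "c > 0"
  proof -
    have "c \<ge> 0" unfolding c_def by (simp add: sum_nonneg)
    moreover have "c \<noteq> 0" using cy yne cinner_self_eq0 by force
    ultimately show ?thesis by simp
  qed
  define z where "z = complex_of_real (1 / sqrt c) *s y"
  have zW: "z \<in> W" unfolding z_def by (rule vec.subspace_scale[OF W yW])
  have zz: "cinner z z = 1"
  proof -
    have "cinner z z = complex_of_real (1 / sqrt c) * complex_of_real (1 / sqrt c) * complex_of_real c"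
      unfolding z_def by (simp add: cinner_scale_left cinner_scale_right cy)
    also have "\<dots> = complex_of_real ((1 / sqrt c) * (1 / sqrt c) * c)" by (simp only: of_real_mult)
    also have "(1 / sqrt c) * (1 / sqrt c) * c = c / (sqrt c * sqrt c)" by simp
    also have "\<dots> = 1" using cpos by simp
    finally show ?thesis by simp
  qed
  have zorth: "cinner z (w l) = 0" "cinner (w l) z = 0" if "l \<in> {1..m}" for l
    using yorth[OF that] unfolding z_def
    by (simp_all add: cinner_scale_left, subst cinner_commute, simp add: cinner_scale_left)
  define w2 where "w2 = w(Suc m := z)"
  have on2: "onf w2 (Suc m)"
    unfolding onf_def
  proof (intro ballI)
    fix j j' assume j: "j \<in> {1..Suc m}" and j': "j' \<in> {1..Suc m}"
    show "cinner (w2 j) (w2 j') = (if j = j' then 1 else 0)"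
    proof (cases "j = Suc m"; cases "j' = Suc m")
      assume "j \<noteq> Suc m" "j' \<noteq> Suc m"
      thus ?thesis using on j j' unfolding onf_def w2_def by auto
    qed (use j j' zz zorth in \<open>auto simp: w2_def\<close>)
  qed
  have w2W: "\<forall>j\<in>{1..Suc m}. w2 j \<in> W" using wW zW unfolding w2_def by auto
  obtain w' where w': "\<forall>j\<in>{1..Suc m}. w' j = w2 j" "\<forall>j\<in>{1..vec.dim W}. w' j \<in> W"
      "onf w' (vec.dim W)"
  proof -
    have "vec.dim W - Suc m = n" using Suc.prems(1) by simp
    from Suc.IH[OF this on2 w2W] show ?thesis using that by blast
  qed
  show ?case using w' by (intro exI[of _ w']) (auto simp: w2_def)
qed

lemma onf_extend:
  assumes "vec.subspace W" "onf w m" "\<forall>j\<in>{1..m}. w j \<in> W"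
  shows "\<exists>w'. (\<forall>j\<in>{1..m}. w' j = w j) \<and> (\<forall>j\<in>{1..vec.dim W}. w' j \<in> W) \<and> onf w' (vec.dim W)"
  using onf_extend_aux[OF assms(1) refl assms(2,3)] .



declare sigma.simps[simp del]

lemma sigma_ge1: "sigma k d i j \<ge> 1"
  by (subst sigma.simps) auto

locale pd =
  fixes B :: "complex^'n^'n" and k :: nat and V :: "nat \<Rightarrow> (complex^'n) set"
  assumes k1: "k \<ge> 1"
    and sub: "\<forall>i\<le>k. vec.subspace (V i)"
    and orth: "\<forall>i\<le>k. \<forall>i'\<le>k. i \<noteq> i' \<longrightarrow> (\<forall>x\<in>V i. \<forall>y\<in>V i'. cinner x y = 0)"
    and dec: "\<forall>x. \<exists>v. (\<forall>i\<le>k. v i \<in> V i) \<and> x = (\<Sum>i\<le>k. v i)"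
    and V0: "V 0 = {x. B *v x = 0}"
    and BV: "\<forall>i. 1 \<le> i \<and> i \<le> k \<longrightarrow> (\<forall>x\<in>V i. B *v x \<in> V (i - 1))"
    and H1: "\<forall>i. 1 \<le> i \<and> i < k \<longrightarrow>
           (\<forall>x\<in>V i. Eadj B V i (Eop B V i x) - Eop B V (i + 1) (Eadj B V (i + 1) x) = x)"
    and H2: "\<forall>x\<in>V k. Eadj B V k (Eop B V k x) = x"
begin

abbreviation "dd i \<equiv> vec.dim (V i)"
abbreviation "sg i j \<equiv> sigma k (\<lambda>m. vec.dim (V m)) i j"
abbreviation "Bs \<equiv> adjoint B"

lemma orthD: "i \<le> k \<Longrightarrow> i' \<le> k \<Longrightarrow> i \<noteq> i' \<Longrightarrow> x \<in> V i \<Longrightarrow> y \<in> V i' \<Longrightarrow> cinner x y = 0"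
  using orth by blast
lemma BVD: "1 \<le> i \<Longrightarrow> i \<le> k \<Longrightarrow> x \<in> V i \<Longrightarrow> B *v x \<in> V (i - 1)"
  using BV by blast
lemma subD: "i \<le> k \<Longrightarrow> vec.subspace (V i)"
  using sub by blast

lemma cproj_id: assumes "i \<le> k" "y \<in> V i" shows "cproj (V i) y = y"
  unfolding cproj_def
proof (rule the_equality)
  show "y \<in> V i \<and> (\<forall>z\<in>V i. cinner (y - y) z = 0)" using assms by simp
  fix y' assume h: "y' \<in> V i \<and> (\<forall>z\<in>V i. cinner (y - y') z = 0)"
  have "y - y' \<in> V i" using subD[OF assms(1)] assms(2) h vec.subspace_diff by blast
  hence "cinner (y - y') (y - y') = 0" using h by blast
  thus "y' = y" using cinner_self_eq0 by (metis eq_iff_diff_eq_0)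
qed

lemma adjV: assumes "1 \<le> i" "i \<le> k + 1" "y \<in> V (i - 1)"
  shows "Bs *v y = (if i \<le> k then Bs *v y else 0)" "i \<le> k \<Longrightarrow> Bs *v y \<in> V i"
proof -
  obtain v where v: "\<forall>l\<le>k. v l \<in> V l" "Bs *v y = (\<Sum>l\<le>k. v l)" using dec by blast
  have z: "v l = 0" if l: "l \<le> k" "l \<noteq> i" for l
  proof -
    have "cinner (Bs *v y) (v l) = cinner y (B *v v l)" by (rule adj_right)
    also have "\<dots> = 0"
    proof (cases "l = 0")
      case True thus ?thesis using v(1) V0 by auto
    next
      case False
      hence "B *v v l \<in> V (l - 1)" using BVD v(1) l by simp
      moreover have "l - 1 \<noteq> i - 1" "l - 1 \<le> k" "i - 1 \<le> k" using False l assms by auto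
      ultimately show ?thesis using orthD[of "i - 1" "l - 1" y "B *v v l"] assms(3) by simp
    qed
    finally have a: "cinner (Bs *v y) (v l) = 0" .
    have "cinner (Bs *v y) (v l) = (\<Sum>l'\<le>k. cinner (v l') (v l))" by (simp add: v(2) cinner_sum_left)
    also have "\<dots> = (\<Sum>l'\<le>k. if l' = l then cinner (v l) (v l) else 0)"
    proof (rule sum.cong)
      fix l' assume "l' \<in> {..k}"
      thus "cinner (v l') (v l) = (if l' = l then cinner (v l) (v l) else 0)"
        using orthD[of l' l "v l'" "v l"] v(1) l by auto
    qed simp
    also have "\<dots> = cinner (v l) (v l)" using l by (simp add: sum.delta)
    finally show ?thesis using a cinner_self_eq0 by metis
  qed
  have "Bs *v y = (\<Sum>l\<le>k. if l = i then v i else 0)"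
    unfolding v(2) by (rule sum.cong) (use z in auto)
  also have "\<dots> = (if i \<le> k then v i else 0)" by (simp add: sum.delta)
  finally have e: "Bs *v y = (if i \<le> k then v i else 0)" .
  thus "Bs *v y = (if i \<le> k then Bs *v y else 0)" by simp
  show "i \<le> k \<Longrightarrow> Bs *v y \<in> V i" using e v(1) by simp
qed

lemma H2': assumes "x \<in> V k" shows "Bs *v (B *v x) = x"
proof -
  have bx: "B *v x \<in> V (k - 1)" using BVD k1 assms by simp
  have "Eop B V k x = B *v x" unfolding Eop_def using cproj_id bx by simp
  moreover have "Bs *v (B *v x) \<in> V k" using adjV(2)[OF k1 _ bx] by simp
  moreover have "Eadj B V k (Eop B V k x) = x" using H2 assms by blast
  ultimately show ?thesis using cproj_id[of k] unfolding Eadj_def by simp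
qed

lemma H1': assumes "1 \<le> i" "i < k" "x \<in> V i" shows "Bs *v (B *v x) - B *v (Bs *v x) = x"
proof -
  have bx: "B *v x \<in> V (i - 1)" using BVD assms by simp
  have e1: "Eop B V i x = B *v x" unfolding Eop_def using cproj_id bx assms by simp
  have "Bs *v (B *v x) \<in> V i" using adjV(2)[OF assms(1) _ bx] assms by simp
  hence e2: "Eadj B V i (B *v x) = Bs *v (B *v x)" unfolding Eadj_def using cproj_id assms by simp
  have bsx: "Bs *v x \<in> V (i + 1)" using adjV(2)[of "i+1" x] assms by simp
  hence e3: "Eadj B V (i + 1) x = Bs *v x" unfolding Eadj_def using cproj_id assms by simp
  have "B *v (Bs *v x) \<in> V i" using BVD[of "i+1"] bsx assms by simp
  hence e4: "Eop B V (i + 1) (Bs *v x) = B *v (Bs *v x)" unfolding Eop_def using cproj_id assms by simp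
  have "Eadj B V i (Eop B V i x) - Eop B V (i + 1) (Eadj B V (i + 1) x) = x" using H1 assms by blast
  thus ?thesis using e1 e2 e3 e4 by simp
qed

definition Inv :: "nat \<Rightarrow> (nat \<Rightarrow> nat \<Rightarrow> complex^'n) \<Rightarrow> bool" where
  "Inv m u \<longleftrightarrow>
    (\<forall>i\<in>{m..k}. (\<forall>j\<in>{1..dd i}. u i j \<in> V i) \<and> onf (u i) (dd i)) \<and>
    (\<forall>i\<in>{m<..k}. dd i \<le> dd (i - 1) \<and>
        (\<forall>j\<in>{1..dd i}. B *v u i j = complex_of_real (sg i j) *s u (i - 1) j)) \<and>
    (\<forall>i\<in>{m..k}. \<forall>j\<in>{1..dd i}. Bs *v u i j =
        (if i < k \<and> j \<le> dd (i + 1) then complex_of_real (sg (i + 1) j) *s u (i + 1) j else 0))"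

lemma Inv_base: "\<exists>u. Inv k u"
proof -
  obtain w where w: "\<forall>j\<in>{1..dd k}. w j \<in> V k" "onf w (dd k)"
    using onf_extend[OF subD[of k] , of "\<lambda>_. 0" 0] by (auto simp: onf_def)
  have "Bs *v w j = 0" if "j \<in> {1..dd k}" for j
    using adjV(1)[of "k+1" "w j"] w(1) that by simp
  hence "Inv k (\<lambda>_. w)" unfolding Inv_def using w by auto
  thus ?thesis by blast
qed

lemma Inv_eig: assumes inv: "Inv m u" and m: "1 \<le> m" "m \<le> k" and j: "j \<in> {1..dd m}"
  shows "Bs *v (B *v u m j) = complex_of_real ((sg m j)^2) *s u m j"
proof -
  have um: "u m j \<in> V m" using inv m j unfolding Inv_def by auto
  show ?thesis
  proof (cases "m < k")
    case False
    hence "m = k" using m by simp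
    moreover have "sg k j = 1" by (subst sigma.simps) simp
    ultimately show ?thesis using H2' um by simp
  next
    case True
    have e: "Bs *v (B *v u m j) = u m j + B *v (Bs *v u m j)"
      using H1'[OF m(1) True um] by (simp add: algebra_simps)
    have bs: "Bs *v u m j = (if j \<le> dd (m + 1) then complex_of_real (sg (m + 1) j) *s u (m + 1) j else 0)"
      using inv j m True unfolding Inv_def by auto
    show ?thesis
    proof (cases "j \<le> dd (m + 1)")
      case True2: True
      have "B *v u (m + 1) j = complex_of_real (sg (m + 1) j) *s u m j"
        using inv True True2 j unfolding Inv_def by auto
      hence "B *v (Bs *v u m j) = complex_of_real ((sg (m + 1) j)^2) *s u m j"
        using bs True2 by (simp add: matrix_vector_mult_scaleR vec.scale power2_eq_square)
      moreover have "sg m j = sqrt (1 + (sg (m + 1) j)^2)"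
        using True True2 by (subst sigma.simps) simp
      ultimately show ?thesis using e by (simp add: vec.scale_left_distrib)
    next
      case False
      moreover have "sg m j = 1" using False by (subst sigma.simps) simp
      ultimately show ?thesis using e bs by simp
    qed
  qed
qed

lemma InvD:
  assumes "Inv m u"
  shows "\<And>i j. i \<in> {m..k} \<Longrightarrow> j \<in> {1..dd i} \<Longrightarrow> u i j \<in> V i"
    and "\<And>i. i \<in> {m..k} \<Longrightarrow> onf (u i) (dd i)"
    and "\<And>i. i \<in> {m<..k} \<Longrightarrow> dd i \<le> dd (i - 1)"
    and "\<And>i j. i \<in> {m<..k} \<Longrightarrow> j \<in> {1..dd i} \<Longrightarrow> B *v u i j = complex_of_real (sg i j) *s u (i - 1) j"
    and "\<And>i j. i \<in> {m..k} \<Longrightarrow> j \<in> {1..dd i} \<Longrightarrow> Bs *v u i j =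
        (if i < k \<and> j \<le> dd (i + 1) then complex_of_real (sg (i + 1) j) *s u (i + 1) j else 0)"
proof -
  note c = assms[unfolded Inv_def]
  note c1 = conjunct1[OF c] and c2 = conjunct1[OF conjunct2[OF c]] and c3 = conjunct2[OF conjunct2[OF c]]
  show "\<And>i j. i \<in> {m..k} \<Longrightarrow> j \<in> {1..dd i} \<Longrightarrow> u i j \<in> V i" using c1 by simp
  show "\<And>i. i \<in> {m..k} \<Longrightarrow> onf (u i) (dd i)" using c1 by simp
  show "\<And>i. i \<in> {m<..k} \<Longrightarrow> dd i \<le> dd (i - 1)" using c2 by simp
  show "\<And>i j. i \<in> {m<..k} \<Longrightarrow> j \<in> {1..dd i} \<Longrightarrow> B *v u i j = complex_of_real (sg i j) *s u (i - 1) j"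
    using c2 by simp
  show "\<And>i j. i \<in> {m..k} \<Longrightarrow> j \<in> {1..dd i} \<Longrightarrow> Bs *v u i j =
        (if i < k \<and> j \<le> dd (i + 1) then complex_of_real (sg (i + 1) j) *s u (i + 1) j else 0)"
    using c3 by simp
qed

lemma Inv_step: assumes inv: "Inv i u" and i: "1 \<le> i" "i \<le> k"
  shows "\<exists>u'. Inv (i - 1) u'"
proof -
  have ui: "\<forall>j\<in>{1..dd i}. u i j \<in> V i" "onf (u i) (dd i)" using InvD(1,2)[OF inv, of i] i by auto
  define w where "w j = complex_of_real (1 / sg i j) *s (B *v u i j)" for j
  have sgp: "sg i j > 0" for j using sigma_ge1[of k "\<lambda>m. vec.dim (V m)" i j] by linarith
  have wV: "\<forall>j\<in>{1..dd i}. w j \<in> V (i - 1)"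
    unfolding w_def using vec.subspace_scale[OF subD[of "i - 1"]] BVD[OF i] ui(1) i by auto
  have won: "onf w (dd i)" unfolding onf_def
  proof (intro ballI)
    fix j j' assume j: "j \<in> {1..dd i}" and j': "j' \<in> {1..dd i}"
    have "cinner (w j) (w j') = complex_of_real (1 / sg i j) * complex_of_real (1 / sg i j') *
        cinner (u i j) (Bs *v (B *v u i j'))"
      unfolding w_def by (simp add: cinner_scale_left cinner_scale_right adj_left)
    also have "\<dots> = complex_of_real (1 / sg i j) * complex_of_real (1 / sg i j') *
        complex_of_real ((sg i j')^2) * cinner (u i j) (u i j')"
      using Inv_eig[OF inv i j'] by (simp add: cinner_scale_right)
    also have "\<dots> = (if j = j' then 1 else 0)"
      using ui(2) j j' sgp[of j'] unfolding onf_def by (auto simp: power2_eq_square)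
    finally show "cinner (w j) (w j') = (if j = j' then 1 else 0)" .
  qed
  have dle: "dd i \<le> dd (i - 1)" using onf_le_dim[OF won wV] .
  obtain w' where w': "\<forall>j\<in>{1..dd i}. w' j = w j" "\<forall>j\<in>{1..dd (i - 1)}. w' j \<in> V (i - 1)"
      "onf w' (dd (i - 1))"
  proof -
    have "i - 1 \<le> k" using i by simp
    from onf_extend[OF subD[OF this] won wV] show ?thesis using that by blast
  qed
  define u' where "u' = u(i - 1 := w')"
  have Bu: "B *v u i j = complex_of_real (sg i j) *s w' j" if "j \<in> {1..dd i}" for j
    using w'(1) that sgp[of j] unfolding w_def by (simp add: vec.scale_scale)
  have bsw1: "Bs *v w' j = complex_of_real (sg i j) *s u i j" if j: "j \<in> {1..dd i}" for j
  proof -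
    have "Bs *v w' j = complex_of_real (1 / sg i j) *s (Bs *v (B *v u i j))"
      using w'(1) j unfolding w_def by (simp add: vec.scale)
    also have "\<dots> = complex_of_real (sg i j) *s u i j"
      using Inv_eig[OF inv i j] sgp[of j] by (simp add: vec.scale_scale power2_eq_square)
    finally show ?thesis .
  qed
  have bsw2: "Bs *v w' j = 0" if j: "j \<in> {1..dd (i - 1)}" "j > dd i" for j
  proof -
    have inV: "Bs *v w' j \<in> V i" using adjV(2)[OF i(1) _ , of "w' j"] w'(2) j i by simp
    have sp: "Bs *v w' j \<in> vec.span (u i ` {1..dd i})" using onf_span[OF ui(2) ui(1)] inV by blast
    show ?thesis
    proof (rule orth_span_zero[OF sp], intro ballI)
      fix s assume "s \<in> u i ` {1..dd i}"
      then obtain l where l: "l \<in> {1..dd i}" "s = u i l" by blast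
      have "cinner (Bs *v w' j) s = cinner (w' j) (B *v u i l)" using l adj_right by simp
      also have "\<dots> = cnj (complex_of_real (sg i l)) * cinner (w' j) (w' l)"
        using Bu[OF l(1)] by (simp add: cinner_scale_right)
      also have "cinner (w' j) (w' l) = 0" using w'(3) j l dle unfolding onf_def by auto
      finally show "cinner (Bs *v w' j) s = 0" by simp
    qed
  qed
  have "Inv (i - 1) u'"
    unfolding Inv_def
  proof (intro conjI ballI)
    fix i' j assume i': "i' \<in> {i - 1..k}" and j: "j \<in> {1..dd i'}"
    show "u' i' j \<in> V i'"
    proof (cases "i' = i - 1")
      case True thus ?thesis using w'(2) j unfolding u'_def by simp
    next
      case False hence "i' \<in> {i..k}" using i' by auto
      thus ?thesis using InvD(1)[OF inv] False j unfolding u'_def by simp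
    qed
  next
    fix i' assume i': "i' \<in> {i - 1..k}"
    show "onf (u' i') (dd i')"
    proof (cases "i' = i - 1")
      case True thus ?thesis using w'(3) unfolding u'_def by simp
    next
      case False hence "i' \<in> {i..k}" using i' by auto
      thus ?thesis using InvD(2)[OF inv] False unfolding u'_def by simp
    qed
  next
    fix i' assume i': "i' \<in> {i - 1<..k}"
    show "dd i' \<le> dd (i' - 1)"
    proof (cases "i' = i")
      case True thus ?thesis using dle by simp
    next
      case False hence "i' \<in> {i<..k}" using i' by auto
      thus ?thesis using InvD(3)[OF inv] by simp
    qed
  next
    fix i' j assume i': "i' \<in> {i - 1<..k}" and j: "j \<in> {1..dd i'}"
    show "B *v u' i' j = complex_of_real (sg i' j) *s u' (i' - 1) j"
    proof (cases "i' = i")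
      case True
      have "i \<noteq> i - 1" using i by simp
      thus ?thesis using Bu j i True unfolding u'_def by simp
    next
      case False
      hence "i' \<in> {i<..k}" "i' \<noteq> i - 1" "i' - 1 \<noteq> i - 1" using i' i by auto
      thus ?thesis using InvD(4)[OF inv, of i' j] j unfolding u'_def by simp
    qed
  next
    fix i' j assume i': "i' \<in> {i - 1..k}" and j: "j \<in> {1..dd i'}"
    show "Bs *v u' i' j = (if i' < k \<and> j \<le> dd (i' + 1)
        then complex_of_real (sg (i' + 1) j) *s u' (i' + 1) j else 0)"
    proof (cases "i' = i - 1")
      case True
      have u1: "u' i' = w'" "u' (i' + 1) = u i" "i' + 1 = i" "i' < k" using True i unfolding u'_def by auto
      show ?thesis
      proof (cases "j \<le> dd i")
        case True
        thus ?thesis using bsw1 u1 j by auto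
      next
        case False
        thus ?thesis using bsw2 u1 j by auto
      qed
    next
      case False
      hence "i' \<in> {i..k}" "i' + 1 \<noteq> i - 1" using i' by auto
      thus ?thesis using InvD(5)[OF inv, of i' j] j False unfolding u'_def by simp
    qed
  qed
  thus ?thesis by blast
qed

lemma Inv_all: "n \<le> k \<Longrightarrow> \<exists>u. Inv (k - n) u"
proof (induction n)
  case 0 thus ?case using Inv_base by simp
next
  case (Suc n)
  then obtain u where "Inv (k - n) u" by auto
  moreover have "1 \<le> k - n" "k - n \<le> k" using Suc.prems by auto
  ultimately obtain u' where "Inv (k - n - 1) u'" using Inv_step by blast
  moreover have "k - n - 1 = k - Suc n" by simp
  ultimately show ?case by metis
qed

end

theorem proposition5p6:
  fixes B :: "complex^'n^'n" and k :: nat and V :: "nat \<Rightarrow> (complex^'n) set"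
  assumes "k \<ge> 1"
    and "B ** (B ** adjoint B - adjoint B ** B) = - B"
    and "mpow B k \<noteq> 0" and "mpow B (k + 1) = 0"
    and "\<forall>i\<le>k. vec.subspace (V i)"
    and "\<forall>i\<le>k. \<forall>i'\<le>k. i \<noteq> i' \<longrightarrow> (\<forall>x\<in>V i. \<forall>y\<in>V i'. cinner x y = 0)"
    and "\<forall>x. \<exists>v. (\<forall>i\<le>k. v i \<in> V i) \<and> x = (\<Sum>i\<le>k. v i)"
    and "V 0 = {x. B *v x = 0}"
    and "\<forall>i. 1 \<le> i \<and> i \<le> k \<longrightarrow> (\<forall>x\<in>V i. B *v x \<in> V (i - 1))"
    and "\<forall>i. 1 \<le> i \<and> i < k \<longrightarrow>
           (\<forall>x\<in>V i. Eadj B V i (Eop B V i x) - Eop B V (i + 1) (Eadj B V (i + 1) x) = x)"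
    and "\<forall>x\<in>V k. Eadj B V k (Eop B V k x) = x"
  shows "\<exists>u :: nat \<Rightarrow> nat \<Rightarrow> complex^'n.
     (\<forall>i\<le>k.
        (\<forall>j\<in>{1..vec.dim (V i)}. u i j \<in> V i) \<and>
        (\<forall>j\<in>{1..vec.dim (V i)}. \<forall>j'\<in>{1..vec.dim (V i)}.
            cinner (u i j) (u i j') = (if j = j' then 1 else 0)) \<and>
        V i \<subseteq> vec.span (u i ` {1..vec.dim (V i)})) \<and>
     (\<forall>i\<in>{1..k}. vec.dim (V i) \<le> vec.dim (V (i - 1))) \<and>
     (\<forall>j\<in>{1..vec.dim (V 0)}. B *v u 0 j = 0) \<and>
     (\<forall>i\<in>{1..k}. \<forall>j\<in>{1..vec.dim (V i)}.
        B *v u i j = complex_of_real (sigma k (\<lambda>m. vec.dim (V m)) i j) *s u (i - 1) j)"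
proof -
  have P: "pd B k V" unfolding pd_def using assms(1) assms(5-11) by (intro conjI) assumption+
  interpret pd B k V by (rule P)
  obtain u where inv: "Inv 0 u" using Inv_all[of k] by auto
  show ?thesis
  proof (intro exI[of _ u] conjI allI impI)
    fix i assume i: "i \<le> k"
    hence ii: "i \<in> {0..k}" by simp
    show "\<forall>j\<in>{1..vec.dim (V i)}. u i j \<in> V i" using InvD(1)[OF inv ii] by blast
    show "\<forall>j\<in>{1..vec.dim (V i)}. \<forall>j'\<in>{1..vec.dim (V i)}.
            cinner (u i j) (u i j') = (if j = j' then 1 else 0)"
      using InvD(2)[OF inv ii] unfolding onf_def by blast
    show "V i \<subseteq> vec.span (u i ` {1..vec.dim (V i)})"
      using onf_span[OF InvD(2)[OF inv ii]] InvD(1)[OF inv ii] by blast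
  next
    show "\<forall>i\<in>{1..k}. vec.dim (V i) \<le> vec.dim (V (i - 1))"
    proof
      fix i assume "i \<in> {1..k}"
      hence ii: "i \<in> {0<..k}" by simp
      show "vec.dim (V i) \<le> vec.dim (V (i - 1))" using InvD(3)[OF inv ii] .
    qed
  next
    show "\<forall>j\<in>{1..vec.dim (V 0)}. B *v u 0 j = 0"
    proof
      fix j assume "j \<in> {1..vec.dim (V 0)}"
      hence "u 0 j \<in> V 0" using InvD(1)[OF inv, of 0 j] by simp
      thus "B *v u 0 j = 0" using assms(8) by simp
    qed
  next
    show "\<forall>i\<in>{1..k}. \<forall>j\<in>{1..vec.dim (V i)}.
        B *v u i j = complex_of_real (sigma k (\<lambda>m. vec.dim (V m)) i j) *s u (i - 1) j"
    proof (intro ballI)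
      fix i j assume "i \<in> {1..k}" "j \<in> {1..vec.dim (V i)}"
      thus "B *v u i j = complex_of_real (sigma k (\<lambda>m. vec.dim (V m)) i j) *s u (i - 1) j"
        using InvD(4)[OF inv, of i j] by simp
    qed
  qed
qed

end
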